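(* Every $k$-uniform $(D,c,\epsilon)$-structure with $D\ge 1$ is a $(\lambda,p)_k$-structure for $\lambda=c$ and $p=D^{-\epsilon/k}$.
   Context: For a hypergraph $\mathcal{H}$, $\Delta_i(\mathcal{H})$ is the maximum number of edges containing a fixed vertex set of size $i$. For parameters $D,c>0$ and $0<\epsilon\le 1$, a $k$-uniform hypergraph $\mathcal{H}$ is a $(D,c,\epsilon)$-structure if (i) $|\mathcal{E}(\mathcal{H})|\ge D|V(\mathcal{H})|$, (ii) $\Delta_1(\mathcal{H})\le cD$, (iii) $\Delta_2(\mathcal{H})\le cD^{1-\epsilon}$. For $p\in(0,1]$: $w_p(\mathcal{H})=\sum_{E}p^{|E|}$; $\bar w_p(\mathcal{H})=w_p(\mathcal{H})/|V(\mathcal{H})|$; $\Delta_{i,p}(\mathcal{H})=\max_{|L|=i}\sum_{E\supseteq L}p^{|E|}$. A hypergraph is $k$-bounded if all edges have size at most $k$; it is a $(\lambda,p)_k$-structure if it is $k$-bounded with (1) $\bar w_p(\mathcal{H})\ge p$, (2) $\Delta_{1,p}(\mathcal{H})\le\lambda\bar w_p(\mathcal{H})$, (3) $\Delta_{2,p}(\mathcal{H})\le\lambda\bar w_p(\mathcal{H})p^k$. *)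

theory Defs
  imports Complex_Main
begin

definition hypergraph :: "'a set \<Rightarrow> 'a set set \<Rightarrow> bool" where
  "hypergraph V E \<longleftrightarrow> finite V \<and> (\<forall>e\<in>E. e \<subseteq> V)"

definition uniform :: "nat \<Rightarrow> 'a set \<Rightarrow> 'a set set \<Rightarrow> bool" where
  "uniform k V E \<longleftrightarrow> hypergraph V E \<and> (\<forall>e\<in>E. card e = k)"

definition bounded :: "nat \<Rightarrow> 'a set \<Rightarrow> 'a set set \<Rightarrow> bool" where
  "bounded k V E \<longleftrightarrow> hypergraph V E \<and> (\<forall>e\<in>E. card e \<le> k)"

definition Delta :: "nat \<Rightarrow> 'a set \<Rightarrow> 'a set set \<Rightarrow> nat" where
  "Delta i V E = Max (insert 0 {card {e\<in>E. L \<subseteq> e} | L. L \<subseteq> V \<and> card L = i})"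

definition w_p :: "real \<Rightarrow> 'a set \<Rightarrow> 'a set set \<Rightarrow> real" where
  "w_p p V E = (\<Sum>e\<in>E. p ^ card e)"

definition wbar_p :: "real \<Rightarrow> 'a set \<Rightarrow> 'a set set \<Rightarrow> real" where
  "wbar_p p V E = w_p p V E / real (card V)"

definition Delta_p :: "nat \<Rightarrow> real \<Rightarrow> 'a set \<Rightarrow> 'a set set \<Rightarrow> real" where
  "Delta_p i p V E = Max (insert 0 {(\<Sum>e\<in>{e\<in>E. L \<subseteq> e}. p ^ card e) | L. L \<subseteq> V \<and> card L = i})"

definition DCeps_structure :: "nat \<Rightarrow> real \<Rightarrow> real \<Rightarrow> real \<Rightarrow> 'a set \<Rightarrow> 'a set set \<Rightarrow> bool" where
  "DCeps_structure k D c \<epsilon> V E \<longleftrightarrow> uniform k V E \<and>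
     real (card E) \<ge> D * real (card V) \<and>
     real (Delta 1 V E) \<le> c * D \<and>
     real (Delta 2 V E) \<le> c * D powr (1 - \<epsilon>)"

definition lambda_p_structure :: "nat \<Rightarrow> real \<Rightarrow> real \<Rightarrow> 'a set \<Rightarrow> 'a set set \<Rightarrow> bool" where
  "lambda_p_structure k lam p V E \<longleftrightarrow> bounded k V E \<and>
     wbar_p p V E \<ge> p \<and>
     Delta_p 1 p V E \<le> lam * wbar_p p V E \<and>
     Delta_p 2 p V E \<le> lam * wbar_p p V E * p ^ k"

end

theory Submission
  imports Defs
begin

lemma Delta_p_le:
  assumes U: "uniform k V E" and q0: "0 \<le> p"
  shows "Delta_p i p V E \<le> real (Delta i V E) * p ^ k"
proof -
  have fV: "finite V" using U by (simp add: uniform_def hypergraph_def)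
  let ?S = "{card {e\<in>E. L \<subseteq> e} | L. L \<subseteq> V \<and> card L = i}"
  let ?T = "{(\<Sum>e\<in>{e\<in>E. L \<subseteq> e}. p ^ card e) | L. L \<subseteq> V \<and> card L = i}"
  have fS: "finite ?S"
  proof -
    have "?S \<subseteq> (\<lambda>L. card {e\<in>E. L \<subseteq> e}) ` Pow V" by auto
    thus ?thesis using fV finite_subset by blast
  qed
  have fT: "finite ?T"
  proof -
    have "?T \<subseteq> (\<lambda>L. \<Sum>e\<in>{e\<in>E. L \<subseteq> e}. p ^ card e) ` Pow V" by auto
    thus ?thesis using fV finite_subset by blast
  qed
  have "x \<le> real (Delta i V E) * p ^ k" if xin: "x \<in> insert 0 ?T" for x
  proof (cases "x = 0")
    case True thus ?thesis using q0 by simp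
  next
    case False
    then obtain L where L: "L \<subseteq> V" "card L = i" and x: "x = (\<Sum>e\<in>{e\<in>E. L \<subseteq> e}. p ^ card e)"
      using xin False by auto
    have "x = (\<Sum>e\<in>{e\<in>E. L \<subseteq> e}. p ^ k)"
      unfolding x using U by (intro sum.cong) (auto simp: uniform_def)
    also have "\<dots> = real (card {e\<in>E. L \<subseteq> e}) * p ^ k" by simp
    also have "card {e\<in>E. L \<subseteq> e} \<le> Delta i V E"
      unfolding Delta_def using fS L by (intro Max_ge) auto
    hence "real (card {e\<in>E. L \<subseteq> e}) * p ^ k \<le> real (Delta i V E) * p ^ k"
      using q0 by (intro mult_right_mono) auto
    finally show ?thesis .
  qed
  thus ?thesis unfolding Delta_p_def using fT by (intro Max.boundedI) auto
qed

theorem lemma3p4: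
  fixes V :: "'a set" and E :: "'a set set" and k :: nat and D c \<epsilon> :: real
  assumes "V \<noteq> {}"
    and "D \<ge> 1" and "c > 0" and "0 < \<epsilon>" and "\<epsilon> \<le> 1"
    and "DCeps_structure k D c \<epsilon> V E"
  shows "lambda_p_structure k c (D powr (- \<epsilon> / real k)) V E"
proof -
  define p where "p = D powr (- \<epsilon> / real k)"
  define q where "q = p ^ k"
  have U: "uniform k V E" and cE: "real (card E) \<ge> D * real (card V)"
    and d1: "real (Delta 1 V E) \<le> c * D" and d2: "real (Delta 2 V E) \<le> c * D powr (1 - \<epsilon>)"
    using assms(6) by (auto simp: DCeps_structure_def)
  have fV: "finite V" using U by (simp add: uniform_def hypergraph_def)
  have cV: "card V > 0" using fV assms(1) by (simp add: card_gt_0_iff)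
  have p0: "0 < p" unfolding p_def using assms(2) by simp
  have p1: "p \<le> 1"
  proof -
    have "- \<epsilon> / real k \<le> 0" using assms(4) by (simp add: divide_nonpos_nonneg)
    hence "D powr (- \<epsilon> / real k) \<le> D powr 0" using assms(2) by (rule powr_mono)
    thus ?thesis unfolding p_def using assms(2) by simp
  qed
  have q0: "0 \<le> q" unfolding q_def using p0 by simp
  have qD: "D powr (- \<epsilon>) \<le> q"
  proof (cases "k = 0")
    case True
    have "D powr (- \<epsilon>) \<le> D powr 0" using assms(2,4) by (intro powr_mono) auto
    thus ?thesis unfolding q_def using True assms(2) by simp
  next
    case False
    have "q = D powr (real k * (- \<epsilon> / real k))"
      unfolding q_def p_def using assms(2) by (subst powr_power) auto
    also have "\<dots> = D powr (- \<epsilon>)" using False by simp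
    finally show ?thesis by simp
  qed
  have w: "w_p p V E = real (card E) * q"
    unfolding w_p_def q_def using U by (simp add: uniform_def)
  have wb: "wbar_p p V E = real (card E) * q / real (card V)"
    unfolding wbar_p_def w by simp
  have wbD: "D * q \<le> wbar_p p V E"
    unfolding wb using cV mult_right_mono[OF cE q0] by (simp add: field_simps mult_ac)
  have Deps: "D powr (1 - \<epsilon>) = D * D powr (- \<epsilon>)"
  proof -
    have "D powr (1 - \<epsilon>) = D powr (1 + - \<epsilon>)" by simp
    also have "\<dots> = D powr 1 * D powr (- \<epsilon>)" by (rule powr_add)
    finally show ?thesis using assms(2) by simp
  qed
  have D1: "D powr (1 - \<epsilon>) \<le> D * q"
    unfolding Deps using qD assms(2) by simp
  have one: "1 \<le> D powr (1 - \<epsilon>)" using assms(2,5) by (simp add: ge_one_powr_ge_zero)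
  have B: "bounded k V E" using U by (simp add: uniform_def bounded_def)
  have c1: "p \<le> wbar_p p V E" using p1 one D1 wbD by linarith
  have c2: "Delta_p 1 p V E \<le> c * wbar_p p V E"
  proof -
    have "Delta_p 1 p V E \<le> real (Delta 1 V E) * q"
      unfolding q_def using Delta_p_le[OF U] p0 by simp
    also have "\<dots> \<le> c * D * q" using d1 q0 by (intro mult_right_mono) auto
    also have "\<dots> = c * (D * q)" by simp
    also have "\<dots> \<le> c * wbar_p p V E" using wbD assms(3) by (intro mult_left_mono) auto
    finally show ?thesis .
  qed
  have c3: "Delta_p 2 p V E \<le> c * wbar_p p V E * p ^ k"
  proof -
    have "Delta_p 2 p V E \<le> real (Delta 2 V E) * q"
      unfolding q_def using Delta_p_le[OF U] p0 by simp
    also have "\<dots> \<le> c * D powr (1 - \<epsilon>) * q" using d2 q0 by (intro mult_right_mono) auto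
    also have "\<dots> \<le> c * wbar_p p V E * q"
      using D1 wbD assms(3) q0 by (intro mult_right_mono mult_left_mono) auto
    finally show ?thesis unfolding q_def .
  qed
  show ?thesis unfolding lambda_p_structure_def p_def[symmetric] using B c1 c2 c3 by simp
qed

end
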